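(* Let $\mathcal{G}$ be a Grothendieck category, $X\in\mathcal{G}$, $\sigma$ an ordinal, $(X_\alpha\mid\alpha\le\sigma)$ a chain of subobjects of $X$ with $X_0=0$, $X_\sigma=X$, $X_\mu=\bigcup_{\alpha<\mu}X_\alpha$ for limit $\mu\le\sigma$, and let $(A_\alpha\mid\alpha<\sigma)$ be subobjects of $X$ with $X_{\alpha+1}=X_\alpha+A_\alpha$ for all $\alpha<\sigma$. Let $\mathcal{L}$ be the set of closed subsets of $\sigma$. If $(S_i\mid i\in I)$ is any family of elements of $\mathcal{L}$, then $\bigcup_{i\in I}S_i\in\mathcal{L}$ and $\bigcap_{i\in I}S_i\in\mathcal{L}$. Moreover, the restriction $\ell:\mathcal{L}\to\mathrm{Subobj}(X)$ is a complete lattice homomorphism, i.e. $\ell(\bigcup_i S_i)=\sum_i\ell(S_i)$ and $\ell(\bigcap_iS_i)=\bigcap_i\ell(S_i)$.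
   Context: For $S\subseteq\sigma$ (with $\sigma$ identified with the set of ordinals $<\sigma$), $\ell(S)=\sum_{\alpha\in S}A_\alpha\in\mathrm{Subobj}(X)$. A subset $S\subseteq\sigma$ is called closed if every $\alpha\in S$ satisfies $X_\alpha\cap A_\alpha\subseteq\sum_{\gamma\in S,\,\gamma<\alpha}A_\gamma$. Sums, intersections and direct unions are taken in the lattice $\mathrm{Subobj}(X)$ of subobjects of $X$. *)

theory Defs
  imports Main
begin

text \<open>The lattice Subobj(X) of subobjects of an object X of a Grothendieck category
is modelled abstractly by a complete lattice which is modular and upper continuous
(AB5: meets distribute over directed joins). Ordinals \<open>\<le> \<sigma>\<close> are modelled as the
initial segment below \<open>\<sigma>\<close> of a well-ordered type.\<close>

definition modular_lattice :: "'a::complete_lattice itself \<Rightarrow> bool" where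
  "modular_lattice _ \<longleftrightarrow> (\<forall>x y z::'a. x \<le> z \<longrightarrow> sup x (inf y z) = inf (sup x y) z)"

definition directed_set :: "'a::complete_lattice set \<Rightarrow> bool" where
  "directed_set D \<longleftrightarrow> D \<noteq> {} \<and> (\<forall>x\<in>D. \<forall>y\<in>D. \<exists>z\<in>D. x \<le> z \<and> y \<le> z)"

definition upper_continuous :: "'a::complete_lattice itself \<Rightarrow> bool" where
  "upper_continuous _ \<longleftrightarrow>
     (\<forall>(x::'a) D. directed_set D \<longrightarrow> inf x (Sup D) = Sup ((\<lambda>d. inf x d) ` D))"

definition osucc :: "'o::wellorder \<Rightarrow> 'o" where
  "osucc \<alpha> = (LEAST \<beta>. \<alpha> < \<beta>)"

text \<open>\<open>\<mu>\<close> is a limit ordinal (or zero): no largest element below it.\<close>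
definition olimit :: "'o::wellorder \<Rightarrow> bool" where
  "olimit \<mu> \<longleftrightarrow> (\<forall>\<alpha><\<mu>. \<exists>\<beta>. \<alpha> < \<beta> \<and> \<beta> < \<mu>)"

definition ell :: "('o \<Rightarrow> 'a::complete_lattice) \<Rightarrow> 'o set \<Rightarrow> 'a" where
  "ell A S = Sup (A ` S)"

definition closed_set :: "'o::wellorder \<Rightarrow> ('o \<Rightarrow> 'a::complete_lattice) \<Rightarrow> ('o \<Rightarrow> 'a) \<Rightarrow> 'o set \<Rightarrow> bool" where
  "closed_set \<sigma> X A S \<longleftrightarrow> S \<subseteq> {\<alpha>. \<alpha> < \<sigma>} \<and>
     (\<forall>\<alpha>\<in>S. inf (X \<alpha>) (A \<alpha>) \<le> ell A {\<gamma>\<in>S. \<gamma> < \<alpha>})"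

end

theory Submission
  imports Defs
begin

locale L =
  fixes \<sigma> :: "'o::wellorder" and X A :: "'o \<Rightarrow> 'a::complete_lattice"
  assumes modular: "modular_lattice TYPE('a)"
    and upcont: "upper_continuous TYPE('a)"
    and chain: "\<And>\<alpha> \<beta>. \<alpha> \<le> \<beta> \<Longrightarrow> \<beta> \<le> \<sigma> \<Longrightarrow> X \<alpha> \<le> X \<beta>"
    and Xlim: "\<And>\<mu>. \<mu> \<le> \<sigma> \<Longrightarrow> olimit \<mu> \<Longrightarrow> X \<mu> = Sup (X ` {\<alpha>. \<alpha> < \<mu>})"
    and Xsucc: "\<And>\<alpha>. \<alpha> < \<sigma> \<Longrightarrow> X (osucc \<alpha>) = sup (X \<alpha>) (A \<alpha>)"
begin

lemma modl: "(x::'a) \<le> z \<Longrightarrow> sup x (inf y z) = inf (sup x y) z"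
  using modular unfolding modular_lattice_def by blast

lemma uc: "directed_set D \<Longrightarrow> inf (x::'a) (Sup D) = Sup ((\<lambda>d. inf x d) ` D)"
  using upcont unfolding upper_continuous_def by blast

lemma ord_induct[consumes 1, case_names lim suc]:
  assumes "\<beta> \<le> \<sigma>"
    and lim: "\<And>\<beta>. \<beta> \<le> \<sigma> \<Longrightarrow> olimit \<beta> \<Longrightarrow> (\<And>\<gamma>. \<gamma> < \<beta> \<Longrightarrow> P \<gamma>) \<Longrightarrow> P \<beta>"
    and suc: "\<And>\<beta> \<gamma>. \<beta> \<le> \<sigma> \<Longrightarrow> \<gamma> < \<beta> \<Longrightarrow> (\<forall>\<delta>. \<delta> < \<beta> \<longleftrightarrow> \<delta> \<le> \<gamma>)
       \<Longrightarrow> X \<beta> = sup (X \<gamma>) (A \<gamma>) \<Longrightarrow> P \<gamma> \<Longrightarrow> P \<beta>"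
  shows "P \<beta>"
  using assms(1)
proof (induction \<beta> rule: less_induct)
  case (less \<beta>)
  show ?case
  proof (cases "olimit \<beta>")
    case True
    have "\<And>\<gamma>. \<gamma> < \<beta> \<Longrightarrow> P \<gamma>"
    proof -
      fix \<gamma> assume "\<gamma> < \<beta>"
      then have "\<gamma> \<le> \<sigma>" using less.prems by simp
      then show "P \<gamma>" using less.IH[OF \<open>\<gamma> < \<beta>\<close>] by blast
    qed
    then show ?thesis using lim[OF less.prems True] by blast
  next
    case False
    then obtain \<gamma> where g: "\<gamma> < \<beta>" "\<not>(\<exists>\<delta>. \<gamma> < \<delta> \<and> \<delta> < \<beta>)" unfolding olimit_def by auto
    have all: "\<forall>\<delta>. \<delta> < \<beta> \<longleftrightarrow> \<delta> \<le> \<gamma>" proof (intro allI iffI)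
      fix \<delta> assume "\<delta> < \<beta>" then show "\<delta> \<le> \<gamma>" using g(2) not_le by blast
    next
      fix \<delta> assume "\<delta> \<le> \<gamma>" then show "\<delta> < \<beta>" using g(1) by (rule le_less_trans)
    qed
    have "osucc \<gamma> = \<beta>" unfolding osucc_def
    proof (rule Least_equality)
      show "\<gamma> < \<beta>" by (rule g(1))
    next
      fix y assume gy: "\<gamma> < y"
      show "\<beta> \<le> y"
      proof (rule ccontr)
        assume "\<not> \<beta> \<le> y"
        then have "y < \<beta>" by (rule not_le_imp_less)
        then show False using g(2) gy by blast
      qed
    qed
    moreover have "\<gamma> < \<sigma>" using g(1) less.prems by (rule less_le_trans)
    ultimately have X: "X \<beta> = sup (X \<gamma>) (A \<gamma>)" using Xsucc by blast
    have "P \<gamma>" using less.IH[OF g(1)] \<open>\<gamma> < \<sigma>\<close> by simp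
    then show ?thesis using suc[OF less.prems g(1) all X] by blast
  qed
qed

lemma ell_mono: "S \<subseteq> T \<Longrightarrow> ell A S \<le> ell A T"
  unfolding ell_def by (rule Sup_subset_mono) auto

lemma A_le_X: assumes "\<delta> < \<beta>" "\<beta> \<le> \<sigma>" shows "A \<delta> \<le> X \<beta>"
proof -
  have "osucc \<delta> \<le> \<beta>" unfolding osucc_def using assms(1) by (rule Least_le)
  moreover have "\<delta> < \<sigma>" using assms by (rule less_le_trans)
  ultimately have "X (osucc \<delta>) \<le> X \<beta>" "X (osucc \<delta>) = sup (X \<delta>) (A \<delta>)"
    using Xsucc[of \<delta>] chain[of "osucc \<delta>" \<beta>] assms by auto
  then show ?thesis by (metis le_supE)
qed

lemma ell_le_X: "(\<forall>\<delta>\<in>S. \<delta> < \<beta>) \<Longrightarrow> \<beta> \<le> \<sigma> \<Longrightarrow> ell A S \<le> X \<beta>"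
  unfolding ell_def by (auto intro!: Sup_least A_le_X)

lemma X_le_all: assumes "\<beta> \<le> \<sigma>" shows "X \<beta> \<le> ell A {\<delta>. \<delta> < \<beta>}"
  using assms
proof (induction \<beta> rule: ord_induct)
  case (lim \<beta>)
  then show ?case
  proof -
    have "X \<beta> = Sup (X ` {\<alpha>. \<alpha> < \<beta>})" using Xlim lim by simp
    also have "\<dots> \<le> ell A {\<delta>. \<delta> < \<beta>}"
    proof (rule Sup_least, clarify)
      fix \<gamma> assume "\<gamma> < \<beta>"
      then have "X \<gamma> \<le> ell A {\<delta>. \<delta> < \<gamma>}" using lim by simp
      also have "\<dots> \<le> ell A {\<delta>. \<delta> < \<beta>}" using \<open>\<gamma> < \<beta>\<close> by (intro ell_mono) auto
      finally show "X \<gamma> \<le> ell A {\<delta>. \<delta> < \<beta>}" .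
    qed
    finally show ?thesis .
  qed
next
  case (suc \<beta> \<gamma>)
  have "X \<gamma> \<le> ell A {\<delta>. \<delta> < \<beta>}"
  proof -
    have "{\<delta>. \<delta> < \<gamma>} \<subseteq> {\<delta>. \<delta> < \<beta>}" using suc(2) by auto
    then have "ell A {\<delta>. \<delta> < \<gamma>} \<le> ell A {\<delta>. \<delta> < \<beta>}" by (rule ell_mono)
    with suc(5) show ?thesis by (rule order_trans)
  qed
  moreover have "A \<gamma> \<le> ell A {\<delta>. \<delta> < \<beta>}" unfolding ell_def using suc(2) by (auto intro: Sup_upper)
  ultimately show ?case using suc(4) by simp
qed

lemma K:
  assumes cl: "closed_set \<sigma> X A S" and "\<beta> \<le> \<sigma>"
  shows "\<alpha> \<le> \<beta> \<longrightarrow> inf (X \<alpha>) (ell A {\<gamma>\<in>S. \<gamma> < \<beta>}) \<le> ell A {\<gamma>\<in>S. \<gamma> < \<alpha>}"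
  using assms(2)
proof (induction \<beta> rule: ord_induct)
  case (lim \<beta>)
  show ?case
  proof
    assume "\<alpha> \<le> \<beta>"
    show "inf (X \<alpha>) (ell A {\<gamma>\<in>S. \<gamma> < \<beta>}) \<le> ell A {\<gamma>\<in>S. \<gamma> < \<alpha>}"
    proof (cases "\<alpha> = \<beta>")
      case True then show ?thesis by simp
    next
      case False
      with \<open>\<alpha> \<le> \<beta>\<close> have ab: "\<alpha> < \<beta>" by simp
      define D where "D = (\<lambda>\<gamma>. ell A {\<delta>\<in>S. \<delta> < \<gamma>}) ` {\<gamma>. \<alpha> \<le> \<gamma> \<and> \<gamma> < \<beta>}"
      have dir: "directed_set D" unfolding directed_set_def
      proof (intro conjI ballI)
        show "D \<noteq> {}" unfolding D_def using ab by auto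
      next
        fix x y assume "x \<in> D" "y \<in> D"
        then obtain g1 g2 where g: "\<alpha> \<le> g1" "g1 < \<beta>" "\<alpha> \<le> g2" "g2 < \<beta>"
          "x = ell A {\<delta>\<in>S. \<delta> < g1}" "y = ell A {\<delta>\<in>S. \<delta> < g2}" unfolding D_def by auto
        show "\<exists>z\<in>D. x \<le> z \<and> y \<le> z"
        proof (cases "g1 \<le> g2")
          case True
          then have "x \<le> y" unfolding g by (intro ell_mono) auto
          moreover have "y \<in> D" unfolding D_def using g by auto
          ultimately show ?thesis by auto
        next
          case False
          then have "y \<le> x" unfolding g by (intro ell_mono) auto
          moreover have "x \<in> D" unfolding D_def using g by auto
          ultimately show ?thesis by auto
        qed
      qed
      have SupD: "ell A {\<gamma>\<in>S. \<gamma> < \<beta>} \<le> Sup D"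
        unfolding ell_def[of A "{\<gamma>\<in>S. \<gamma> < \<beta>}"]
      proof (rule Sup_least, clarify)
        fix \<delta> assume d: "\<delta> \<in> S" "\<delta> < \<beta>"
        then obtain d' where d': "\<delta> < d'" "d' < \<beta>" using lim(2) unfolding olimit_def by blast
        define g where "g = max \<alpha> d'"
        have "g < \<beta>" "\<alpha> \<le> g" using d' ab unfolding g_def by auto
        then have "ell A {\<delta>\<in>S. \<delta> < g} \<in> D" unfolding D_def by auto
        moreover have "A \<delta> \<le> ell A {\<delta>\<in>S. \<delta> < g}" unfolding ell_def using d d' g_def
          by (intro Sup_upper) (auto simp: less_max_iff_disj)
        ultimately show "A \<delta> \<le> Sup D" by (meson Sup_upper order_trans)
      qed
      have "inf (X \<alpha>) (ell A {\<gamma>\<in>S. \<gamma> < \<beta>}) \<le> inf (X \<alpha>) (Sup D)"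
        using SupD inf_mono by blast
      also have "\<dots> = Sup ((\<lambda>d. inf (X \<alpha>) d) ` D)" using uc[OF dir] .
      also have "\<dots> \<le> ell A {\<gamma>\<in>S. \<gamma> < \<alpha>}"
      proof (rule Sup_least)
        fix y assume "y \<in> (\<lambda>d. inf (X \<alpha>) d) ` D"
        then obtain g where "\<alpha> \<le> g" "g < \<beta>" "y = inf (X \<alpha>) (ell A {\<delta>\<in>S. \<delta> < g})"
          unfolding D_def by auto
        then show "y \<le> ell A {\<gamma>\<in>S. \<gamma> < \<alpha>}"
          using lim(3)[of g] by blast
      qed
      finally show ?thesis .
    qed
  qed
next
  case (suc \<beta> \<gamma>)
  show ?case
  proof
    assume "\<alpha> \<le> \<beta>"
    show "inf (X \<alpha>) (ell A {\<gamma>\<in>S. \<gamma> < \<beta>}) \<le> ell A {\<gamma>\<in>S. \<gamma> < \<alpha>}"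
    proof (cases "\<alpha> = \<beta>")
      case True then show ?thesis by simp
    next
      case False
      with \<open>\<alpha> \<le> \<beta>\<close> have "\<alpha> < \<beta>" by simp
      then have ag: "\<alpha> \<le> \<gamma>" using suc(3) by blast
      have gs: "\<gamma> \<le> \<sigma>" using suc(1,2) by simp
      have IH: "inf (X \<alpha>) (ell A {\<delta>\<in>S. \<delta> < \<gamma>}) \<le> ell A {\<gamma>\<in>S. \<gamma> < \<alpha>}"
        using suc(5) ag by blast
      have Xag: "X \<alpha> \<le> X \<gamma>" using chain ag gs by blast
      show ?thesis
      proof (cases "\<gamma> \<in> S")
        case False
        have lt: "\<And>\<delta>. \<delta> < \<beta> \<longleftrightarrow> \<delta> < \<gamma> \<or> \<delta> = \<gamma>"
          using suc(3) by (simp add: le_less)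
        have "{\<delta>\<in>S. \<delta> < \<beta>} = {\<delta>\<in>S. \<delta> < \<gamma>}" using False unfolding lt by blast
        then show ?thesis using IH by simp
      next
        case True
        define L where "L = ell A {\<delta>\<in>S. \<delta> < \<gamma>}"
        have lt: "\<And>\<delta>. \<delta> < \<beta> \<longleftrightarrow> \<delta> < \<gamma> \<or> \<delta> = \<gamma>"
          using suc(3) by (simp add: le_less)
        have eq: "{\<delta>\<in>S. \<delta> < \<beta>} = insert \<gamma> {\<delta>\<in>S. \<delta> < \<gamma>}" using True unfolding lt by blast
        have ellb: "ell A {\<delta>\<in>S. \<delta> < \<beta>} = sup L (A \<gamma>)"
          unfolding eq L_def ell_def by (simp add: sup_commute)
        have LX: "L \<le> X \<gamma>" unfolding L_def using gs by (intro ell_le_X) auto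
        have clg: "inf (X \<gamma>) (A \<gamma>) \<le> L" using cl True unfolding closed_set_def L_def by blast
        have "inf (sup L (A \<gamma>)) (X \<gamma>) = sup L (inf (A \<gamma>) (X \<gamma>))" using modl[OF LX] by simp
        also have "\<dots> \<le> L" using clg by (simp add: inf_commute)
        finally have m: "inf (sup L (A \<gamma>)) (X \<gamma>) \<le> L" .
        have "inf (X \<alpha>) (sup L (A \<gamma>)) = inf (X \<alpha>) (inf (sup L (A \<gamma>)) (X \<gamma>))"
          proof -
          have "inf (X \<alpha>) (X \<gamma>) = X \<alpha>" using Xag by (rule inf.absorb1)
          have "inf (X \<alpha>) (inf (sup L (A \<gamma>)) (X \<gamma>)) = inf (inf (X \<alpha>) (X \<gamma>)) (sup L (A \<gamma>))"
            by (simp add: ac_simps)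
          with \<open>inf (X \<alpha>) (X \<gamma>) = X \<alpha>\<close> show ?thesis by simp
        qed
        also have "\<dots> \<le> inf (X \<alpha>) L" using m inf_mono by blast
        also have "\<dots> \<le> ell A {\<gamma>\<in>S. \<gamma> < \<alpha>}" using IH L_def by simp
        finally show ?thesis using ellb by simp
      qed
    qed
  qed
qed

lemma K':
  assumes cl: "closed_set \<sigma> X A S" and "\<alpha> \<le> \<sigma>"
  shows "inf (X \<alpha>) (ell A S) \<le> ell A {\<gamma>\<in>S. \<gamma> < \<alpha>}"
proof -
  have "{\<gamma>\<in>S. \<gamma> < \<sigma>} = S" using cl unfolding closed_set_def by auto
  then show ?thesis using K[OF cl order.refl] assms(2) by simp
qed

lemma inter:
  assumes I: "I \<noteq> {}" and cl: "\<And>i. i \<in> I \<Longrightarrow> closed_set \<sigma> X A (S i)" and "\<beta> \<le> \<sigma>"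
  shows "Inf ((\<lambda>i. ell A {\<delta>\<in>S i. \<delta> < \<beta>}) ` I)
           \<le> ell A {\<delta>\<in>{\<alpha>. \<alpha> < \<sigma>} \<inter> (\<Inter>i\<in>I. S i). \<delta> < \<beta>}"
  using assms(3)
proof (induction \<beta> rule: ord_induct)
  case (lim \<beta>)
  define M where "M = Inf ((\<lambda>i. ell A {\<delta>\<in>S i. \<delta> < \<beta>}) ` I)"
  define T where "T = (\<lambda>\<beta>. ell A {\<delta>\<in>{\<alpha>. \<alpha> < \<sigma>} \<inter> (\<Inter>i\<in>I. S i). \<delta> < \<beta>})"
  obtain i0 where i0: "i0 \<in> I" using I by blast
  have MX: "M \<le> X \<beta>"
  proof -
    have "M \<le> ell A {\<delta>\<in>S i0. \<delta> < \<beta>}" unfolding M_def using i0 by (rule INF_lower)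
    also have "\<dots> \<le> X \<beta>" using lim(1) by (intro ell_le_X) auto
    finally show ?thesis .
  qed
  show ?case
  proof (cases "{\<alpha>. \<alpha> < \<beta>} = {}")
    case True
    then have "X \<beta> = bot" using Xlim[OF lim(1,2)] by simp
    then have "M = bot" using MX by (simp add: bot_unique)
    then show ?thesis unfolding M_def by simp
  next
    case False
    have dir: "directed_set (X ` {\<alpha>. \<alpha> < \<beta>})" unfolding directed_set_def
    proof (intro conjI ballI)
      show "X ` {\<alpha>. \<alpha> < \<beta>} \<noteq> {}" using False by blast
    next
      fix x y assume "x \<in> X ` {\<alpha>. \<alpha> < \<beta>}" "y \<in> X ` {\<alpha>. \<alpha> < \<beta>}"
      then obtain g1 g2 where g: "g1 < \<beta>" "g2 < \<beta>" "x = X g1" "y = X g2" by auto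
      have "g1 \<le> \<sigma>" "g2 \<le> \<sigma>" using g lim(1) by auto
      then show "\<exists>z\<in>X ` {\<alpha>. \<alpha> < \<beta>}. x \<le> z \<and> y \<le> z"
      proof (cases "g1 \<le> g2")
        case True
        then have "x \<le> y" using g chain \<open>g2 \<le> \<sigma>\<close> by simp
        then show ?thesis using g(2,4) by auto
      next
        case False
        then have "y \<le> x" using g chain \<open>g1 \<le> \<sigma>\<close> by simp
        then show ?thesis using g(1,3) by auto
      qed
    qed
    have "M = inf M (X \<beta>)" using MX by (simp add: inf.absorb1)
    also have "\<dots> = Sup ((\<lambda>d. inf M d) ` X ` {\<alpha>. \<alpha> < \<beta>})" using Xlim[OF lim(1,2)] uc[OF dir] by simp
    also have "\<dots> \<le> T \<beta>"
    proof (rule Sup_least)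
      fix y assume "y \<in> (\<lambda>d. inf M d) ` X ` {\<alpha>. \<alpha> < \<beta>}"
      then obtain g where g: "g < \<beta>" "y = inf M (X g)" by auto
      have "y \<le> Inf ((\<lambda>i. ell A {\<delta>\<in>S i. \<delta> < g}) ` I)"
      proof (rule INF_greatest)
        fix i assume i: "i \<in> I"
        have "y \<le> inf (X g) (ell A {\<delta>\<in>S i. \<delta> < \<beta>})"
          proof -
          have "M \<le> ell A {\<delta>\<in>S i. \<delta> < \<beta>}" unfolding M_def using i by (rule INF_lower)
          then show ?thesis unfolding g(2) by (auto intro: le_infI1)
        qed
        also have "\<dots> \<le> ell A {\<delta>\<in>S i. \<delta> < g}"
          using K[OF cl[OF i] lim(1), of g] g by simp
        finally show "y \<le> ell A {\<delta>\<in>S i. \<delta> < g}" .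
      qed
      also have "\<dots> \<le> T g" using lim(3)[OF g(1)] unfolding T_def .
      also have "\<dots> \<le> T \<beta>" unfolding T_def using g(1) by (intro ell_mono) auto
      finally show "y \<le> T \<beta>" .
    qed
    finally show ?thesis unfolding M_def T_def .
  qed
next
  case (suc \<beta> \<gamma>)
  define M where "M = Inf ((\<lambda>i. ell A {\<delta>\<in>S i. \<delta> < \<beta>}) ` I)"
  define T where "T = (\<lambda>\<beta>. ell A {\<delta>\<in>{\<alpha>. \<alpha> < \<sigma>} \<inter> (\<Inter>i\<in>I. S i). \<delta> < \<beta>})"
  have gs: "\<gamma> \<le> \<sigma>" using suc(1,2) by simp
  have IH: "Inf ((\<lambda>i. ell A {\<delta>\<in>S i. \<delta> < \<gamma>}) ` I) \<le> T \<gamma>" using suc(5) unfolding T_def .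
  have TT: "T \<gamma> \<le> T \<beta>" unfolding T_def using suc(2) by (intro ell_mono) auto
  have hlp: "inf (X \<gamma>) Y \<le> T \<gamma>" if Y: "\<And>i. i \<in> I \<Longrightarrow> Y \<le> ell A {\<delta>\<in>S i. \<delta> < \<beta>}" for Y
  proof -
    have "inf (X \<gamma>) Y \<le> Inf ((\<lambda>i. ell A {\<delta>\<in>S i. \<delta> < \<gamma>}) ` I)"
    proof (rule INF_greatest)
      fix i assume i: "i \<in> I"
      have "inf (X \<gamma>) Y \<le> inf (X \<gamma>) (ell A {\<delta>\<in>S i. \<delta> < \<beta>})" using Y[OF i] inf_mono by blast
      also have "\<dots> \<le> ell A {\<delta>\<in>S i. \<delta> < \<gamma>}"
        using K[OF cl[OF i] suc(1), of \<gamma>] suc(2) by simp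
      finally show "inf (X \<gamma>) Y \<le> ell A {\<delta>\<in>S i. \<delta> < \<gamma>}" .
    qed
    then show ?thesis using IH by simp
  qed
  have MI: "\<And>i. i \<in> I \<Longrightarrow> M \<le> ell A {\<delta>\<in>S i. \<delta> < \<beta>}" unfolding M_def by (rule INF_lower)
  obtain i0 where i0: "i0 \<in> I" using I by blast
  have MX: "M \<le> X \<beta>" using MI[OF i0] ell_le_X[of "{\<delta>\<in>S i0. \<delta> < \<beta>}" \<beta>] suc(1) by auto
  show ?case
  proof (cases "\<forall>i\<in>I. \<gamma> \<in> S i")
    case True
    have gsig: "\<gamma> < \<sigma>" using suc(1,2) by simp
    have AI: "A \<gamma> \<le> ell A {\<delta>\<in>S i. \<delta> < \<beta>}" if "i \<in> I" for i
      unfolding ell_def using True that suc(2) by (intro Sup_upper) auto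
    define N where "N = sup M (A \<gamma>)"
    have NI: "N \<le> ell A {\<delta>\<in>S i. \<delta> < \<beta>}" if "i \<in> I" for i
      unfolding N_def using MI[OF that] AI[OF that] by simp
    have AX: "A \<gamma> \<le> X \<beta>" using suc(2,1) by (rule A_le_X)
    have NX: "N \<le> sup (A \<gamma>) (X \<gamma>)" using MX AX suc(4) unfolding N_def by (simp add: sup_commute)
    have "A \<gamma> \<le> N" unfolding N_def by simp
    then have "sup (A \<gamma>) (inf (X \<gamma>) N) = inf (sup (A \<gamma>) (X \<gamma>)) N" by (rule modl)
    also have "\<dots> = N" using NX by (simp add: inf.absorb2)
    finally have Neq: "N = sup (A \<gamma>) (inf (X \<gamma>) N)" by simp
    have "M \<le> N" unfolding N_def by simp
    also have "\<dots> \<le> sup (A \<gamma>) (T \<gamma>)" using Neq hlp[OF NI] sup_mono by (metis order.refl)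
    also have "\<dots> \<le> T \<beta>"
    proof (rule sup_least)
      show "A \<gamma> \<le> T \<beta>" unfolding T_def ell_def using True gsig suc(2) by (intro Sup_upper) auto
    qed (rule TT)
    finally show ?thesis unfolding M_def T_def .
  next
    case False
    then obtain j where j: "j \<in> I" "\<gamma> \<notin> S j" by blast
    have lt: "\<And>\<delta>. \<delta> < \<beta> \<longleftrightarrow> \<delta> < \<gamma> \<or> \<delta> = \<gamma>"
      using suc(3) by (simp add: le_less)
    have "{\<delta>\<in>S j. \<delta> < \<beta>} = {\<delta>\<in>S j. \<delta> < \<gamma>}" using j(2) unfolding lt by blast
    then have "ell A {\<delta>\<in>S j. \<delta> < \<beta>} \<le> X \<gamma>" using gs by (auto intro: ell_le_X)
    then have "M \<le> X \<gamma>" using MI[OF j(1)] by simp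
    then have "M = inf (X \<gamma>) M" by (simp add: inf.absorb2)
    also have "\<dots> \<le> T \<gamma>" using hlp MI by blast
    also have "\<dots> \<le> T \<beta>" by (rule TT)
    finally show ?thesis unfolding M_def T_def .
  qed
qed

end

theorem lemma2p5:
  fixes \<sigma> :: "'o::wellorder"
    and X A :: "'o \<Rightarrow> 'a::complete_lattice"
    and S :: "'i \<Rightarrow> 'o set" and I :: "'i set"
  assumes modular: "modular_lattice TYPE('a)"
    and upcont: "upper_continuous TYPE('a)"
    and chain: "\<And>\<alpha> \<beta>. \<alpha> \<le> \<beta> \<Longrightarrow> \<beta> \<le> \<sigma> \<Longrightarrow> X \<alpha> \<le> X \<beta>"
    and X0: "\<And>\<alpha>. (\<forall>\<beta>. \<alpha> \<le> \<beta>) \<Longrightarrow> X \<alpha> = bot"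
    and Xsigma: "X \<sigma> = top"
    and Xlim: "\<And>\<mu>. \<mu> \<le> \<sigma> \<Longrightarrow> olimit \<mu> \<Longrightarrow> X \<mu> = Sup (X ` {\<alpha>. \<alpha> < \<mu>})"
    and Xsucc: "\<And>\<alpha>. \<alpha> < \<sigma> \<Longrightarrow> X (osucc \<alpha>) = sup (X \<alpha>) (A \<alpha>)"
    and Sclosed: "\<And>i. i \<in> I \<Longrightarrow> closed_set \<sigma> X A (S i)"
  shows "closed_set \<sigma> X A (\<Union>i\<in>I. S i)
       \<and> closed_set \<sigma> X A ({\<alpha>. \<alpha> < \<sigma>} \<inter> (\<Inter>i\<in>I. S i))
       \<and> ell A (\<Union>i\<in>I. S i) = Sup ((\<lambda>i. ell A (S i)) ` I)
       \<and> ell A ({\<alpha>. \<alpha> < \<sigma>} \<inter> (\<Inter>i\<in>I. S i)) = Inf ((\<lambda>i. ell A (S i)) ` I)"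
proof -
  interpret L \<sigma> X A using modular upcont chain Xlim Xsucc by unfold_locales
  define U where "U = (\<Union>i\<in>I. S i)"
  define T where "T = {\<alpha>. \<alpha> < \<sigma>} \<inter> (\<Inter>i\<in>I. S i)"
  have c1: "closed_set \<sigma> X A U" unfolding closed_set_def
  proof (intro conjI ballI)
    show "U \<subseteq> {\<alpha>. \<alpha> < \<sigma>}" unfolding U_def using Sclosed unfolding closed_set_def by blast
  next
    fix \<alpha> assume "\<alpha> \<in> U"
    then obtain j where j: "j \<in> I" "\<alpha> \<in> S j" unfolding U_def by blast
    have "inf (X \<alpha>) (A \<alpha>) \<le> ell A {\<gamma>\<in>S j. \<gamma> < \<alpha>}"
      using Sclosed[OF j(1)] j(2) unfolding closed_set_def by blast
    also have "\<dots> \<le> ell A {\<gamma>\<in>U. \<gamma> < \<alpha>}" unfolding U_def using j(1) by (intro ell_mono) auto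
    finally show "inf (X \<alpha>) (A \<alpha>) \<le> ell A {\<gamma>\<in>U. \<gamma> < \<alpha>}" .
  qed
  have e1: "ell A U = Sup ((\<lambda>i. ell A (S i)) ` I)"
    unfolding U_def ell_def by (rule SUP_UNION)
  have c2e2: "closed_set \<sigma> X A T \<and> ell A T = Inf ((\<lambda>i. ell A (S i)) ` I)"
  proof (cases "I = {}")
    case True
    then have T: "T = {\<alpha>. \<alpha> < \<sigma>}" unfolding T_def by simp
    have "closed_set \<sigma> X A T" unfolding closed_set_def
    proof (intro conjI ballI)
      show "T \<subseteq> {\<alpha>. \<alpha> < \<sigma>}" unfolding T by simp
    next
      fix \<alpha> assume "\<alpha> \<in> T"
      then have a: "\<alpha> < \<sigma>" unfolding T by simp
      have "{\<gamma>\<in>T. \<gamma> < \<alpha>} = {\<gamma>. \<gamma> < \<alpha>}" unfolding T using a by auto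
      moreover have "X \<alpha> \<le> ell A {\<gamma>. \<gamma> < \<alpha>}" using a by (intro X_le_all) simp
      ultimately show "inf (X \<alpha>) (A \<alpha>) \<le> ell A {\<gamma>\<in>T. \<gamma> < \<alpha>}" by (simp add: le_infI1)
    qed
    moreover have "ell A T = top"
      using X_le_all[of \<sigma>] Xsigma unfolding T by (simp add: top_unique)
    ultimately show ?thesis using True by simp
  next
    case False
    have "closed_set \<sigma> X A T" unfolding closed_set_def
    proof (intro conjI ballI)
      show "T \<subseteq> {\<alpha>. \<alpha> < \<sigma>}" unfolding T_def by blast
    next
      fix \<alpha> assume aT: "\<alpha> \<in> T"
      then have a: "\<alpha> \<le> \<sigma>" unfolding T_def by (simp add: less_imp_le)
      have "inf (X \<alpha>) (A \<alpha>) \<le> Inf ((\<lambda>i. ell A {\<delta>\<in>S i. \<delta> < \<alpha>}) ` I)"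
      proof (rule INF_greatest)
        fix i assume i: "i \<in> I"
        then have "\<alpha> \<in> S i" using aT unfolding T_def by blast
        then show "inf (X \<alpha>) (A \<alpha>) \<le> ell A {\<delta>\<in>S i. \<delta> < \<alpha>}"
          using Sclosed[OF i] unfolding closed_set_def by blast
      qed
      also have "\<dots> \<le> ell A {\<gamma>\<in>T. \<gamma> < \<alpha>}"
        using inter[OF False Sclosed a] unfolding T_def .
      finally show "inf (X \<alpha>) (A \<alpha>) \<le> ell A {\<gamma>\<in>T. \<gamma> < \<alpha>}" .
    qed
    moreover have "ell A T = Inf ((\<lambda>i. ell A (S i)) ` I)"
    proof (rule antisym)
      show "ell A T \<le> Inf ((\<lambda>i. ell A (S i)) ` I)"
        by (rule INF_greatest, rule ell_mono) (auto simp: T_def)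
    next
      have eqS: "\<And>i. i \<in> I \<Longrightarrow> {\<delta>\<in>S i. \<delta> < \<sigma>} = S i"
        using Sclosed unfolding closed_set_def by blast
      have eqT: "{\<delta>\<in>T. \<delta> < \<sigma>} = T" unfolding T_def by blast
      have "Inf ((\<lambda>i. ell A {\<delta>\<in>S i. \<delta> < \<sigma>}) ` I) \<le> ell A {\<delta>\<in>T. \<delta> < \<sigma>}"
        using inter[OF False Sclosed order.refl] unfolding T_def .
      moreover have "Inf ((\<lambda>i. ell A {\<delta>\<in>S i. \<delta> < \<sigma>}) ` I) = Inf ((\<lambda>i. ell A (S i)) ` I)"
        using eqS by (intro arg_cong[where f=Inf] image_cong) auto
      ultimately show "Inf ((\<lambda>i. ell A (S i)) ` I) \<le> ell A T" using eqT by simp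
    qed
    ultimately show ?thesis by simp
  qed
  show ?thesis using c1 e1 c2e2 unfolding U_def T_def by blast
qed

end
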